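(* Let $X$ be a complex Banach space and let $A:\mathcal{D}(\mathbb{R})\to L(X)$ be a linear map which is multiplicative, i.e. $A(\phi\psi)=A(\phi)A(\psi)$ for all $\phi,\psi\in\mathcal{D}(\mathbb{R})$ (no continuity is assumed). Then for every $\chi\in\mathcal{D}(\mathbb{R})$ the function $$\mathbb{C}\setminus\mathbb{R}\ni z\longmapsto A\Big(\xi\mapsto \frac{\chi(\xi)}{z-\xi}\Big)\in L(X)$$ is strongly holomorphic on $\mathbb{C}\setminus\mathbb{R}$.
   Context: $L(X)$ denotes the algebra of bounded linear operators on $X$ with the operator norm; $\mathcal{D}(\mathbb{R})=C_c^\infty(\mathbb{R})$ (complex-valued). For $z\notin\mathbb{R}$ the function $\xi\mapsto\chi(\xi)/(z-\xi)$ belongs to $\mathcal{D}(\mathbb{R})$. "Strongly holomorphic" means holomorphic as an $L(X)$-valued function (complex differentiable with respect to the operator norm). *)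

theory Defs
  imports "HOL-Analysis.Analysis"
begin

text \<open>A complex Banach space is modelled as a real Banach space (type class banach)
  together with a complex scalar multiplication extending the real one and
  satisfying the complex vector space and norm axioms.\<close>

definition complex_structure :: "(complex \<Rightarrow> 'a::banach \<Rightarrow> 'a) \<Rightarrow> bool" where
  "complex_structure cm \<longleftrightarrow>
     (\<forall>x. cm 1 x = x) \<and>
     (\<forall>a b x. cm (a * b) x = cm a (cm b x)) \<and>
     (\<forall>a b x. cm (a + b) x = cm a x + cm b x) \<and>
     (\<forall>a x y. cm a (x + y) = cm a x + cm a y) \<and>
     (\<forall>r x. cm (complex_of_real r) x = r *\<^sub>R x) \<and>
     (\<forall>a x. norm (cm a x) = cmod a * norm x)"

text \<open>L(X): bounded operators that are complex linear.\<close>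
definition bounded_ops :: "(complex \<Rightarrow> 'a::banach \<Rightarrow> 'a) \<Rightarrow> ('a \<Rightarrow>\<^sub>L 'a) set" where
  "bounded_ops cm = {T. \<forall>a x. blinfun_apply T (cm a x) = cm a (blinfun_apply T x)}"

definition op_scale :: "(complex \<Rightarrow> 'a::banach \<Rightarrow> 'a) \<Rightarrow> complex \<Rightarrow> ('a \<Rightarrow>\<^sub>L 'a) \<Rightarrow> ('a \<Rightarrow>\<^sub>L 'a)" where
  "op_scale cm c T = Blinfun (\<lambda>x. cm c (blinfun_apply T x))"

definition smooth_fun :: "(real \<Rightarrow> complex) \<Rightarrow> bool" where
  "smooth_fun \<phi> \<longleftrightarrow> (\<exists>D :: nat \<Rightarrow> real \<Rightarrow> complex. D 0 = \<phi> \<and>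
      (\<forall>n x. (D n has_vector_derivative D (Suc n) x) (at x)))"

definition test_fun :: "(real \<Rightarrow> complex) \<Rightarrow> bool" where
  "test_fun \<phi> \<longleftrightarrow> smooth_fun \<phi> \<and> compact (closure {x. \<phi> x \<noteq> 0})"

definition op_holomorphic_on ::
  "(complex \<Rightarrow> 'a::banach \<Rightarrow> 'a) \<Rightarrow> (complex \<Rightarrow> ('a \<Rightarrow>\<^sub>L 'a)) \<Rightarrow> complex set \<Rightarrow> bool" where
  "op_holomorphic_on cm F S \<longleftrightarrow>
     (\<forall>z\<in>S. \<exists>D. ((\<lambda>w. op_scale cm (1 / (w - z)) (F w - F z)) \<longlongrightarrow> D) (at z within S))"

end

theory Submission
  imports Defs "HOL-Computational_Algebra.Polynomial"
begin


lemma smooth_coind: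
  assumes P0: "P \<phi>" and step: "\<And>f. P f \<Longrightarrow> \<exists>f'. (\<forall>x. (f has_vector_derivative f' x) (at x)) \<and> P f'"
  shows "smooth_fun \<phi>"
proof -
  define nxt where "nxt f = (SOME f'. (\<forall>x. (f has_vector_derivative f' x) (at x)) \<and> P f')" for f
  have nxt: "(\<forall>x. (f has_vector_derivative nxt f x) (at x)) \<and> P (nxt f)" if "P f" for f
    unfolding nxt_def using someI_ex[OF step[OF that]] by blast
  define D where "D n = (nxt ^^ n) \<phi>" for n
  have PD: "P (D n)" for n by (induction n) (auto simp: D_def nxt P0)
  have "(D n has_vector_derivative D (Suc n) x) (at x)" for n x
    using nxt[OF PD[of n]] by (simp add: D_def)
  moreover have "D 0 = \<phi>" by (simp add: D_def)
  ultimately show ?thesis unfolding smooth_fun_def by blast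
qed

lemma smooth_deriv:
  assumes "smooth_fun f"
  shows "\<exists>f'. (\<forall>x. (f has_vector_derivative f' x) (at x)) \<and> smooth_fun f'"
proof -
  obtain D where D: "D 0 = f" "\<And>n x. (D n has_vector_derivative D (Suc n) x) (at x)"
    using assms unfolding smooth_fun_def by blast
  have "smooth_fun (D 1)" unfolding smooth_fun_def
    by (intro exI[of _ "\<lambda>n. D (Suc n)"]) (auto simp: D)
  then show ?thesis using D by (metis One_nat_def)
qed

lemma smooth_const: "smooth_fun (\<lambda>x. c)"
  unfolding smooth_fun_def
  by (intro exI[of _ "\<lambda>n. if n = 0 then (\<lambda>x. c) else (\<lambda>x. 0)"]) auto

lemma smooth_ofreal: "smooth_fun (\<lambda>x. complex_of_real x)"
proof -
  define D where "D n = (if n = 0 then (\<lambda>x. complex_of_real x) else if n = 1 then (\<lambda>x. 1) else (\<lambda>x. 0))" for n :: nat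
  have "(D n has_vector_derivative D (Suc n) x) (at x)" for n x
  proof (cases "n = 0")
    case True
    then show ?thesis unfolding D_def
      using has_vector_derivative_of_real[OF DERIV_ident, of "at x"] by simp
  qed (auto simp: D_def)
  then show ?thesis unfolding smooth_fun_def by (intro exI[of _ D]) (auto simp: D_def)
qed

inductive_set SA :: "(real \<Rightarrow> complex) set" where
  SA_base: "smooth_fun f \<Longrightarrow> f \<in> SA"
| SA_add: "f \<in> SA \<Longrightarrow> g \<in> SA \<Longrightarrow> (\<lambda>x. f x + g x) \<in> SA"
| SA_mul: "f \<in> SA \<Longrightarrow> g \<in> SA \<Longrightarrow> (\<lambda>x. f x * g x) \<in> SA"
| SA_inv: "f \<in> SA \<Longrightarrow> (\<forall>x. f x \<noteq> 0) \<Longrightarrow> (\<lambda>x. inverse (f x)) \<in> SA"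

lemma SA_deriv:
  assumes "f \<in> SA"
  shows "\<exists>f'. (\<forall>x. (f has_vector_derivative f' x) (at x)) \<and> f' \<in> SA"
  using assms
proof induction
  case (SA_base f)
  then obtain f' where "\<forall>x. (f has_vector_derivative f' x) (at x)" "smooth_fun f'"
    using smooth_deriv by blast
  then show ?case by (intro exI[of _ f'] conjI SA.SA_base) simp_all
next
  case (SA_add f g)
  from SA_add.IH(1) obtain f' where f': "\<forall>x. (f has_vector_derivative f' x) (at x)" "f' \<in> SA" by (elim exE conjE)
  from SA_add.IH(2) obtain g' where g': "\<forall>x. (g has_vector_derivative g' x) (at x)" "g' \<in> SA" by (elim exE conjE)
  define q where "q x = f' x + g' x" for x
  have qS: "q \<in> SA" unfolding q_def by (rule SA.SA_add[OF f'(2) g'(2)])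
  have d: "((\<lambda>x. f x + g x) has_vector_derivative q x) (at x)" for x
    unfolding q_def by (rule has_vector_derivative_add[OF f'(1)[rule_format] g'(1)[rule_format]])
  show ?case by (rule exI[of _ q]) (use d qS in blast)
next
  case (SA_mul f g)
  from SA_mul.IH(1) obtain f' where f': "\<forall>x. (f has_vector_derivative f' x) (at x)" "f' \<in> SA" by (elim exE conjE)
  from SA_mul.IH(2) obtain g' where g': "\<forall>x. (g has_vector_derivative g' x) (at x)" "g' \<in> SA" by (elim exE conjE)
  define q where "q x = f x * g' x + f' x * g x" for x
  have qS: "q \<in> SA" unfolding q_def
    by (rule SA.SA_add[OF SA.SA_mul[OF SA_mul.hyps(1) g'(2)] SA.SA_mul[OF f'(2) SA_mul.hyps(2)]])
  have d: "((\<lambda>x. f x * g x) has_vector_derivative q x) (at x)" for x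
    unfolding q_def by (rule has_vector_derivative_mult[OF f'(1)[rule_format] g'(1)[rule_format]])
  show ?case by (rule exI[of _ q]) (use d qS in blast)
next
  case (SA_inv f)
  from SA_inv.IH obtain f' where f': "\<forall>x. (f has_vector_derivative f' x) (at x)" "f' \<in> SA" by (elim exE conjE)
  have fS: "f \<in> SA" by (rule SA_inv.hyps(1))
  have nz: "\<forall>x. f x \<noteq> 0" by (rule SA_inv.hyps(2))
  have c: "(\<lambda>x. - 1 :: complex) \<in> SA" by (rule SA.SA_base[OF smooth_const])
  have i: "(\<lambda>x. inverse (f x)) \<in> SA" by (rule SA.SA_inv[OF fS nz])
  define q where "q x = f' x * ((- 1) * (inverse (f x) * inverse (f x)))" for x
  have qS: "q \<in> SA" unfolding q_def by (intro SA.SA_mul f' c i)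
  have eq: "f' x * - (inverse (f x) ^ Suc (Suc 0)) = q x" for x
    unfolding q_def by (simp only: power_Suc power_0 mult_1_right mult_minus1 mult_minus_right)
  have d: "((\<lambda>x. inverse (f x)) has_vector_derivative q x) (at x)" for x
    using field_vector_diff_chain_at[OF f'(1)[rule_format, of x] DERIV_inverse[OF nz[rule_format, of x]]]
    unfolding eq o_def .
  show ?case by (rule exI[of _ q]) (use d qS in blast)
qed

lemma SA_smooth: "f \<in> SA \<Longrightarrow> smooth_fun f"
  by (rule smooth_coind[where P="\<lambda>f. f \<in> SA"]) (assumption, erule SA_deriv)

lemma smooth_add: "smooth_fun f \<Longrightarrow> smooth_fun g \<Longrightarrow> smooth_fun (\<lambda>x. f x + g x)"
  by (rule SA_smooth, rule SA.SA_add; rule SA.SA_base)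
lemma smooth_mult: "smooth_fun f \<Longrightarrow> smooth_fun g \<Longrightarrow> smooth_fun (\<lambda>x. f x * g x)"
  by (rule SA_smooth, rule SA.SA_mul; rule SA.SA_base)
lemma smooth_inverse: "smooth_fun f \<Longrightarrow> (\<forall>x. f x \<noteq> 0) \<Longrightarrow> smooth_fun (\<lambda>x. inverse (f x))"
  by (rule SA_smooth, rule SA.SA_inv, rule SA.SA_base)

lemma smooth_affine:
  assumes "smooth_fun f"
  shows "smooth_fun (\<lambda>x. f (a * x + b))"
proof (rule smooth_coind[where P="\<lambda>g. \<exists>c h. smooth_fun h \<and> g = (\<lambda>x. c *\<^sub>R h (a * x + b))"])
  show "\<exists>c h. smooth_fun h \<and> (\<lambda>x. f (a * x + b)) = (\<lambda>x. c *\<^sub>R h (a * x + b))"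
    using assms by (intro exI[of _ 1] exI[of _ f]) auto
next
  fix g assume "\<exists>c h. smooth_fun h \<and> g = (\<lambda>x. c *\<^sub>R h (a * x + b))"
  then obtain c h where h: "smooth_fun h" and g: "g = (\<lambda>x. c *\<^sub>R h (a * x + b))" by blast
  obtain h' where h': "\<forall>x. (h has_vector_derivative h' x) (at x)" "smooth_fun h'"
    using smooth_deriv[OF h] by blast
  have "(g has_vector_derivative (c * a) *\<^sub>R h' (a * x + b)) (at x)" for x
  proof -
    have lin: "((\<lambda>x. a * x + b) has_vector_derivative a) (at x)"
    proof -
      have "((\<lambda>x. a * x + b) has_real_derivative a) (at x)" by (auto intro!: derivative_eq_intros)
      then show ?thesis using has_real_derivative_iff_has_vector_derivative by blast
    qed
    have "((h \<circ> (\<lambda>x. a * x + b)) has_vector_derivative a *\<^sub>R h' (a * x + b)) (at x)"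
      by (rule vector_diff_chain_at[OF lin]) (use h' in auto)
    then have "((\<lambda>x. c *\<^sub>R (h \<circ> (\<lambda>x. a * x + b)) x) has_vector_derivative c *\<^sub>R (a *\<^sub>R h' (a * x + b))) (at x)"
      by (rule bounded_linear.has_vector_derivative[OF bounded_linear_scaleR_right])
    then show ?thesis by (simp add: g o_def)
  qed
  then show "\<exists>g'. (\<forall>x. (g has_vector_derivative g' x) (at x)) \<and> (\<exists>c h. smooth_fun h \<and> g' = (\<lambda>x. c *\<^sub>R h (a * x + b)))"
    apply (intro exI[of _ "\<lambda>x. (c * a) *\<^sub>R h' (a * x + b)"] conjI allI)
     apply assumption
    using h'(2) by blast
qed



fun Pn :: "nat \<Rightarrow> real poly" where
  "Pn 0 = 1"
| "Pn (Suc n) = [:0,0,1:] * (Pn n - pderiv (Pn n))"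

definition Ef :: "nat \<Rightarrow> real \<Rightarrow> real" where
  "Ef n t = (if 0 < t then poly (Pn n) (1/t) * exp (-1/t) else 0)"

lemma poly_exp_lim: "((\<lambda>u. u ^ k * poly p u * exp (- u)) \<longlongrightarrow> (0::real)) at_top"
proof (induction p arbitrary: k)
  case 0
  then show ?case by simp
next
  case (pCons a p)
  have eq: "(\<lambda>u. u ^ k * poly (pCons a p) u * exp (- u)) =
            (\<lambda>u. a * (u ^ k / exp u) + u ^ Suc k * poly p u * exp (- u))"
    by (rule ext) (simp add: exp_minus field_simps)
  have "((\<lambda>u. a * (u ^ k / exp u) + u ^ Suc k * poly p u * exp (- u)) \<longlongrightarrow> a * 0 + 0) at_top"
    by (intro tendsto_add tendsto_mult tendsto_const tendsto_power_div_exp_0 pCons.IH)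
  then show ?case unfolding eq by simp
qed

lemma Ef_deriv_pos:
  assumes "0 < t"
  shows "(Ef n has_real_derivative Ef (Suc n) t) (at t)"
proof -
  let ?p = "Pn n"
  have h1: "((\<lambda>t. poly ?p (1/t)) has_real_derivative poly (pderiv ?p) (1/t) * (- 1 / t^2)) (at t)"
    using assms by (intro DERIV_chain2[OF poly_DERIV]) (auto intro!: derivative_eq_intros simp: power2_eq_square)
  have h2: "((\<lambda>t. exp (-1/t)) has_real_derivative exp (-1/t) * (1 / t^2)) (at t)"
    using assms by (auto intro!: derivative_eq_intros simp: power2_eq_square)
  have h: "((\<lambda>t. poly ?p (1/t) * exp (-1/t)) has_real_derivative
      poly (pderiv ?p) (1/t) * (- 1 / t^2) * exp (-1/t) + exp (-1/t) * (1 / t^2) * poly ?p (1/t)) (at t)"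
    by (rule DERIV_mult[OF h1 h2])
  have "poly (pderiv ?p) (1/t) * (- 1 / t^2) * exp (-1/t) + exp (-1/t) * (1 / t^2) * poly ?p (1/t)
        = Ef (Suc n) t"
    using assms by (simp add: Ef_def poly_mult power2_eq_square field_simps)
  with h have "((\<lambda>t. poly ?p (1/t) * exp (-1/t)) has_real_derivative Ef (Suc n) t) (at t)" by simp
  then show ?thesis
    by (rule has_field_derivative_transform_within_open[where S="{0<..}"]) (use assms in \<open>auto simp: Ef_def\<close>)
qed

lemma Ef_deriv_neg:
  assumes "t < 0"
  shows "(Ef n has_real_derivative Ef (Suc n) t) (at t)"
proof -
  have "((\<lambda>t. 0) has_real_derivative Ef (Suc n) t) (at t)" using assms by (simp add: Ef_def)
  then show ?thesis
    by (rule has_field_derivative_transform_within_open[where S="{..<0}"]) (use assms in \<open>auto simp: Ef_def\<close>)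
qed

lemma Ef_deriv_zero: "(Ef n has_real_derivative Ef (Suc n) 0) (at 0)"
proof -
  have z: "Ef m 0 = 0" for m by (simp add: Ef_def)
  have L: "((\<lambda>y. Ef n y / y) \<longlongrightarrow> 0) (at_left 0)"
  proof (rule Lim_transform_eventually[OF tendsto_const])
    show "\<forall>\<^sub>F x in at_left 0. 0 = Ef n x / x"
    proof -
      have "eventually (\<lambda>x. x \<in> {-1<..<0}) (at_left (0::real))" by (rule eventually_at_left_real) simp
      then show ?thesis by eventually_elim (auto simp: Ef_def)
    qed
  qed
  have R: "((\<lambda>y. Ef n y / y) \<longlongrightarrow> 0) (at_right 0)"
    unfolding at_right_to_top filterlim_filtermap
  proof (rule Lim_transform_eventually[OF poly_exp_lim[of 1 "Pn n"]])
    show "\<forall>\<^sub>F x in at_top. x ^ 1 * poly (Pn n) x * exp (- x) = Ef n (inverse x) / inverse x"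
      using eventually_gt_at_top[of 0] by eventually_elim (auto simp: Ef_def field_simps)
  qed
  have "((\<lambda>y. Ef n y / y) \<longlongrightarrow> 0) (at 0)"
    by (rule filterlim_split_at[OF L R])
  then show ?thesis unfolding has_field_derivative_iff by (simp add: z)
qed

lemma Ef_deriv: "(Ef n has_real_derivative Ef (Suc n) t) (at t)"
  using Ef_deriv_pos Ef_deriv_neg Ef_deriv_zero by (cases "t < 0"; cases "t = 0") auto

lemma smooth_E: "smooth_fun (\<lambda>t. complex_of_real (Ef 0 t))"
  unfolding smooth_fun_def
  by (intro exI[of _ "\<lambda>n t. complex_of_real (Ef n t)"] conjI allI has_vector_derivative_of_real Ef_deriv) simp

lemma Ef0: "Ef 0 t = (if 0 < t then exp (-1/t) else 0)"
  by (simp add: Ef_def)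

lemma Ef0_nonneg: "0 \<le> Ef 0 t" by (simp add: Ef0)
lemma Ef0_pos: "0 < t \<Longrightarrow> 0 < Ef 0 t" by (simp add: Ef0)
lemma Ef0_zero: "t \<le> 0 \<Longrightarrow> Ef 0 t = 0" by (simp add: Ef0)



lemma test_fun_sub:
  assumes "test_fun f" "smooth_fun h" "\<And>x. h x \<noteq> 0 \<Longrightarrow> f x \<noteq> 0"
  shows "test_fun h"
proof -
  have sub: "closure {x. h x \<noteq> 0} \<subseteq> closure {x. f x \<noteq> 0}"
    by (rule closure_mono) (use assms(3) in blast)
  have "compact (closure {x. f x \<noteq> 0} \<inter> closure {x. h x \<noteq> 0})"
    using assms(1) unfolding test_fun_def by (intro compact_Int_closed) auto
  moreover have "closure {x. f x \<noteq> 0} \<inter> closure {x. h x \<noteq> 0} = closure {x. h x \<noteq> 0}"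
    using sub by blast
  ultimately show ?thesis using assms(2) unfolding test_fun_def by simp
qed

lemma smooth_den:
  assumes "Im z \<noteq> 0"
  shows "smooth_fun (\<lambda>\<xi>. inverse (z - complex_of_real \<xi>))"
proof -
  have s: "smooth_fun (\<lambda>x. z + (- 1) * complex_of_real x)"
    by (rule smooth_add[OF smooth_const smooth_mult[OF smooth_const smooth_ofreal]])
  have "smooth_fun (\<lambda>x. inverse (z + (- 1) * complex_of_real x))"
  proof (rule smooth_inverse[OF s], intro allI)
    fix x :: real
    show "z + (- 1) * complex_of_real x \<noteq> 0"
    proof
      assume "z + (- 1) * complex_of_real x = 0"
      then have "Im (z + (- 1) * complex_of_real x) = 0" by simp
      then show False using assms by simp
    qed
  qed
  then show ?thesis by simp
qed

lemma cutoff_exists: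
  assumes "test_fun ch"
  shows "\<exists>\<psi>. test_fun \<psi> \<and> (\<forall>x. ch x \<noteq> 0 \<longrightarrow> \<psi> x = 1)"
proof -
  have "bounded (closure {x. ch x \<noteq> 0})"
    using assms unfolding test_fun_def by (simp add: compact_imp_bounded)
  then obtain a where a: "\<forall>x\<in>closure {x. ch x \<noteq> 0}. norm x \<le> a"
    unfolding bounded_iff by blast
  define R where "R = max a 0"
  have R0: "0 \<le> R" by (simp add: R_def)
  have chR: "ch x \<noteq> 0 \<Longrightarrow> \<bar>x\<bar> \<le> R" for x
    using a closure_subset[of "{x. ch x \<noteq> 0}"] unfolding R_def by force
  define rB where "rB x = Ef 0 (1 * x + (R + 1)) * Ef 0 ((- 1) * x + (R + 1))" for x
  define rQ where "rQ x = Ef 0 (1 * x + (- R)) + Ef 0 ((- 1) * x + (- R))" for x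
  define B where "B x = complex_of_real (Ef 0 (1 * x + (R + 1))) * complex_of_real (Ef 0 ((- 1) * x + (R + 1)))" for x
  define Ou where "Ou x = complex_of_real (Ef 0 (1 * x + (- R))) + complex_of_real (Ef 0 ((- 1) * x + (- R)))" for x
  have BO: "B x + Ou x = complex_of_real (rB x + rQ x)" for x
    by (simp add: B_def Ou_def rB_def rQ_def)
  have rBnn: "0 \<le> rB x" for x unfolding rB_def by (intro mult_nonneg_nonneg Ef0_nonneg)
  have rOnn: "0 \<le> rQ x" for x unfolding rQ_def by (intro add_nonneg_nonneg Ef0_nonneg)
  have pos: "0 < rB x + rQ x" for x
  proof (cases "\<bar>x\<bar> \<le> R")
    case True
    then have "0 < rB x" unfolding rB_def by (intro mult_pos_pos Ef0_pos) auto
    then show ?thesis using rOnn[of x] by linarith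
  next
    case False
    then have "0 < rQ x" unfolding rQ_def
      using Ef0_pos[of "1 * x + (- R)"] Ef0_pos[of "(- 1) * x + (- R)"] Ef0_nonneg[of "1 * x + (- R)"] Ef0_nonneg[of "(- 1) * x + (- R)"]
      by (cases "x > 0") auto
    then show ?thesis using rBnn[of x] by linarith
  qed
  define \<psi> where "\<psi> x = B x * inverse (B x + Ou x)" for x
  have sB: "smooth_fun B" unfolding B_def
    by (intro smooth_mult smooth_affine[OF smooth_E])
  have sOu: "smooth_fun Ou" unfolding Ou_def
    by (intro smooth_add smooth_affine[OF smooth_E])
  have sBO: "smooth_fun (\<lambda>x. B x + Ou x)" by (rule smooth_add[OF sB sOu])
  have nz: "\<forall>x. B x + Ou x \<noteq> 0" using pos BO by (metis less_irrefl of_real_eq_0_iff)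
  have s\<psi>: "smooth_fun \<psi>" unfolding \<psi>_def
    by (rule smooth_mult[OF sB smooth_inverse[OF sBO nz]])
  have supp: "{x. \<psi> x \<noteq> 0} \<subseteq> {-(R+1)..R+1}"
  proof
    fix x assume "x \<in> {x. \<psi> x \<noteq> 0}"
    then have "B x \<noteq> 0" unfolding \<psi>_def by auto
    then have "Ef 0 (1 * x + (R + 1)) \<noteq> 0" "Ef 0 ((- 1) * x + (R + 1)) \<noteq> 0"
      unfolding B_def by auto
    then show "x \<in> {-(R+1)..R+1}" using Ef0_zero[of "1 * x + (R + 1)"] Ef0_zero[of "(- 1) * x + (R + 1)"]
      by (cases "1 * x + (R + 1) \<le> 0"; cases "(- 1) * x + (R + 1) \<le> 0") auto
  qed
  have "closure {x. \<psi> x \<noteq> 0} \<subseteq> {-(R+1)..R+1}"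
    by (rule closure_minimal[OF supp]) simp
  then have "compact (closure {x. \<psi> x \<noteq> 0})"
    by (meson bounded_subset compact_eq_bounded_closed closed_closure compact_Icc compact_imp_bounded)
  then have t\<psi>: "test_fun \<psi>" using s\<psi> unfolding test_fun_def by simp
  have one: "\<psi> x = 1" if "ch x \<noteq> 0" for x
  proof -
    have xR: "\<bar>x\<bar> \<le> R" using chR that by blast
    have "Ou x = 0" unfolding Ou_def using xR Ef0_zero[of "1 * x + (- R)"] Ef0_zero[of "(- 1) * x + (- R)"] by simp
    moreover have "B x \<noteq> 0"
    proof -
      have "0 < rB x" unfolding rB_def using xR by (intro mult_pos_pos Ef0_pos) auto
      then show ?thesis unfolding B_def rB_def by (metis less_irrefl mult_zero_left mult_zero_right of_real_eq_0_iff of_real_mult)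
    qed
    ultimately show ?thesis unfolding \<psi>_def by simp
  qed
  show ?thesis using t\<psi> one by blast
qed

context
  fixes cm :: "complex \<Rightarrow> 'a::banach \<Rightarrow> 'a"
  assumes cs: "complex_structure cm"
begin

lemma cm_one: "cm 1 x = x" and cm_mult: "cm (a * b) x = cm a (cm b x)"
  and cm_addl: "cm (a + b) x = cm a x + cm b x" and cm_addr: "cm a (x + y) = cm a x + cm a y"
  and cm_real: "cm (complex_of_real r) x = r *\<^sub>R x" and cm_norm: "norm (cm a x) = cmod a * norm x"
  using cs unfolding complex_structure_def by blast+

lemma cm_scaleR: "cm c (r *\<^sub>R x) = r *\<^sub>R cm c x"
proof -
  have "cm c (r *\<^sub>R x) = cm c (cm (complex_of_real r) x)" by (simp add: cm_real)
  also have "\<dots> = cm (c * complex_of_real r) x" by (simp add: cm_mult)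
  also have "\<dots> = cm (complex_of_real r * c) x" by (simp add: mult.commute)
  also have "\<dots> = r *\<^sub>R cm c x" by (simp add: cm_mult cm_real)
  finally show ?thesis .
qed

lemma bl_cm: "bounded_linear (\<lambda>x. cm c (blinfun_apply T x))"
proof (rule bounded_linear_intro[where K="cmod c * norm T"])
  show "cm c (blinfun_apply T (x + y)) = cm c (blinfun_apply T x) + cm c (blinfun_apply T y)" for x y
    by (simp add: blinfun.add_right cm_addr)
  show "cm c (blinfun_apply T (r *\<^sub>R x)) = r *\<^sub>R cm c (blinfun_apply T x)" for r x
    by (simp add: blinfun.scaleR_right cm_scaleR)
  show "norm (cm c (blinfun_apply T x)) \<le> norm x * (cmod c * norm T)" for x
    using norm_blinfun[of T x] by (simp add: cm_norm) (metis mult.commute mult.left_commute mult_left_mono norm_ge_zero)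
qed

lemma op_scale_apply: "blinfun_apply (op_scale cm c T) x = cm c (blinfun_apply T x)"
  unfolding op_scale_def by (simp add: bounded_linear_Blinfun_apply[OF bl_cm])

lemma norm_op_scale: "norm (op_scale cm c T) \<le> cmod c * norm T"
proof (rule norm_blinfun_bound)
  show "0 \<le> cmod c * norm T" by simp
  show "norm (blinfun_apply (op_scale cm c T) x) \<le> cmod c * norm T * norm x" for x
    using norm_blinfun[of T x] by (simp add: op_scale_apply cm_norm mult.assoc mult_left_mono)
qed

lemma cm_minus: "cm c (- x) = - cm c x"
proof -
  have "cm c x + cm c (- x) = cm c 0" by (simp add: cm_addr[symmetric])
  moreover have "cm c 0 = 0" using cm_norm[of c 0] by simp
  ultimately show ?thesis by (metis neg_eq_iff_add_eq_0)
qed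

lemma op_scale_cancel:
  assumes "d \<noteq> 0"
  shows "op_scale cm (1 / d) (- op_scale cm d T) = - T"
  by (rule blinfun_eqI) (simp add: op_scale_apply cm_minus cm_mult[symmetric] assms cm_one blinfun.bilinear_simps uminus_blinfun.rep_eq)

end



theorem lemma2p1:
  fixes cm :: "complex \<Rightarrow> 'a::banach \<Rightarrow> 'a"
    and A :: "(real \<Rightarrow> complex) \<Rightarrow> ('a \<Rightarrow>\<^sub>L 'a)"
    and ch :: "real \<Rightarrow> complex"
  assumes cs: "complex_structure cm"
    and range: "\<And>\<phi>. test_fun \<phi> \<Longrightarrow> A \<phi> \<in> bounded_ops cm"
    and add: "\<And>\<phi> \<psi>. test_fun \<phi> \<Longrightarrow> test_fun \<psi> \<Longrightarrow> A (\<lambda>\<xi>. \<phi> \<xi> + \<psi> \<xi>) = A \<phi> + A \<psi>"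
    and scale: "\<And>c \<phi>. test_fun \<phi> \<Longrightarrow> A (\<lambda>\<xi>. c * \<phi> \<xi>) = op_scale cm c (A \<phi>)"
    and mult: "\<And>\<phi> \<psi>. test_fun \<phi> \<Longrightarrow> test_fun \<psi> \<Longrightarrow> A (\<lambda>\<xi>. \<phi> \<xi> * \<psi> \<xi>) = A \<phi> o\<^sub>L A \<psi>"
    and chi: "test_fun ch"
  shows "op_holomorphic_on cm (\<lambda>z. A (\<lambda>\<xi>. ch \<xi> / (z - complex_of_real \<xi>))) {z. Im z \<noteq> 0}"
proof -
  define S where "S = {z. Im z \<noteq> 0}"
  obtain \<psi> where t\<psi>: "test_fun \<psi>" and \<psi>1: "\<And>x. ch x \<noteq> 0 \<Longrightarrow> \<psi> x = 1"
    using cutoff_exists[OF chi] by blast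
  define f where "f z = (\<lambda>\<xi>. ch \<xi> / (z - complex_of_real \<xi>))" for z
  define g where "g z = (\<lambda>\<xi>. \<psi> \<xi> / (z - complex_of_real \<xi>))" for z
  define F where "F z = A (f z)" for z
  define G where "G z = A (g z)" for z
  have den: "z - complex_of_real \<xi> \<noteq> 0" if "z \<in> S" for z \<xi>
  proof
    assume "z - complex_of_real \<xi> = 0"
    then have "Im (z - complex_of_real \<xi>) = 0" by simp
    then show False using that by (simp add: S_def)
  qed
  have sf: "smooth_fun (f z)" if "z \<in> S" for z
  proof -
    have "smooth_fun (\<lambda>\<xi>. ch \<xi> * inverse (z - complex_of_real \<xi>))"
      using chi smooth_den[of z] that unfolding test_fun_def S_def by (intro smooth_mult) auto
    then show ?thesis unfolding f_def by (simp add: divide_inverse)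
  qed
  have sg: "smooth_fun (g z)" if "z \<in> S" for z
  proof -
    have "smooth_fun (\<lambda>\<xi>. \<psi> \<xi> * inverse (z - complex_of_real \<xi>))"
      using t\<psi> smooth_den[of z] that unfolding test_fun_def S_def by (intro smooth_mult) auto
    then show ?thesis unfolding g_def by (simp add: divide_inverse)
  qed
  have tf: "test_fun (f z)" if "z \<in> S" for z
    by (rule test_fun_sub[OF chi sf[OF that]]) (simp add: f_def)
  have tg: "test_fun (g z)" if "z \<in> S" for z
    by (rule test_fun_sub[OF t\<psi> sg[OF that]]) (simp add: g_def)
  have tgf: "test_fun (\<lambda>\<xi>. g z \<xi> * f w \<xi>)" if "z \<in> S" "w \<in> S" for z w
    by (rule test_fun_sub[OF tf[OF that(2)] smooth_mult[OF sg[OF that(1)] sf[OF that(2)]]]) simp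
  have tcgf: "test_fun (\<lambda>\<xi>. (w - z) * (g z \<xi> * f w \<xi>))" if "z \<in> S" "w \<in> S" for z w
    by (rule test_fun_sub[OF tgf[OF that] smooth_mult[OF smooth_const smooth_mult[OF sg[OF that(1)] sf[OF that(2)]]]]) simp
  have pw: "f z \<xi> = f w \<xi> + (w - z) * (g z \<xi> * f w \<xi>)" if "z \<in> S" "w \<in> S" for z w \<xi>
  proof (cases "ch \<xi> = 0")
    case True
    then show ?thesis by (simp add: f_def)
  next
    case False
    have d1: "z - complex_of_real \<xi> \<noteq> 0" and d2: "w - complex_of_real \<xi> \<noteq> 0"
      using den that by auto
    have r: "c / a = c / b + (b - a) * (1 / a * (c / b))" if "a \<noteq> 0" "b \<noteq> 0" for a b c :: complex
      using that by (simp add: field_simps)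
    have e1: "f z \<xi> = ch \<xi> / (z - complex_of_real \<xi>)" "f w \<xi> = ch \<xi> / (w - complex_of_real \<xi>)"
      "g z \<xi> = 1 / (z - complex_of_real \<xi>)" by (simp_all add: f_def g_def \<psi>1[OF False])
    have e2: "w - z = (w - complex_of_real \<xi>) - (z - complex_of_real \<xi>)" by simp
    show ?thesis unfolding e1 e2 by (rule r[OF d1 d2])
  qed
  have ident: "F z = F w + op_scale cm (w - z) (G z o\<^sub>L F w)" if "z \<in> S" "w \<in> S" for z w
  proof -
    have "f z = (\<lambda>\<xi>. f w \<xi> + (\<lambda>\<xi>. (w - z) * (g z \<xi> * f w \<xi>)) \<xi>)"
      using pw[OF that] by (intro ext) simp
    then have "F z = A (f w) + A (\<lambda>\<xi>. (w - z) * (g z \<xi> * f w \<xi>))"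
      unfolding F_def using add[OF tf[OF that(2)] tcgf[OF that]] by simp
    also have "A (\<lambda>\<xi>. (w - z) * (g z \<xi> * f w \<xi>)) = op_scale cm (w - z) (A (\<lambda>\<xi>. g z \<xi> * f w \<xi>))"
      by (rule scale[OF tgf[OF that]])
    also have "A (\<lambda>\<xi>. g z \<xi> * f w \<xi>) = G z o\<^sub>L F w"
      unfolding G_def F_def by (rule mult[OF tg[OF that(1)] tf[OF that(2)]])
    finally show ?thesis unfolding F_def .
  qed
  show ?thesis
    unfolding op_holomorphic_on_def S_def[symmetric]
  proof
    fix z assume zS: "z \<in> S"
    have evS: "eventually (\<lambda>w. w \<noteq> z \<and> w \<in> S) (at z within S)"
      by (simp add: eventually_at_filter)
    have d0: "((\<lambda>w. cmod (w - z)) \<longlongrightarrow> 0) (at z within S)"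
    proof -
      have "((\<lambda>w. w - z) \<longlongrightarrow> z - z) (at z within S)"
        by (intro tendsto_diff tendsto_ident_at tendsto_const)
      then show ?thesis using tendsto_norm_zero by fastforce
    qed
    have "((\<lambda>w. cmod (w - z) * norm (G z)) \<longlongrightarrow> 0 * norm (G z)) (at z within S)"
      by (intro tendsto_mult d0 tendsto_const)
    then have evsmall: "eventually (\<lambda>w. cmod (w - z) * norm (G z) < 1/2) (at z within S)"
      by (rule order_tendstoD(2)) simp
    define C where "C = norm (G z) * (2 * norm (F z))"
    have bound: "norm (F w - F z) \<le> cmod (w - z) * C"
      if wS: "w \<in> S" and sm: "cmod (w - z) * norm (G z) < 1/2" for w
    proof -
      have e: "F z = F w + op_scale cm (w - z) (G z o\<^sub>L F w)" by (rule ident[OF zS wS])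
      have n1: "norm (op_scale cm (w - z) (G z o\<^sub>L F w)) \<le> cmod (w - z) * (norm (G z) * norm (F w))"
        using norm_op_scale[OF cs, of "w - z" "G z o\<^sub>L F w"] norm_blinfun_compose[of "G z" "F w"]
        by (meson mult_left_mono norm_ge_zero order_trans)
      have "norm (F w) \<le> norm (F z) + norm (op_scale cm (w - z) (G z o\<^sub>L F w))"
        using e norm_triangle_ineq4[of "F z" "op_scale cm (w - z) (G z o\<^sub>L F w)"] by simp
      also have "\<dots> \<le> norm (F z) + cmod (w - z) * norm (G z) * norm (F w)"
        using n1 by (simp add: mult.assoc)
      also have "\<dots> \<le> norm (F z) + 1/2 * norm (F w)"
        using sm by (intro add_left_mono mult_right_mono) auto
      finally have nFw: "norm (F w) \<le> 2 * norm (F z)" by simp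
      have "F w - F z = - op_scale cm (w - z) (G z o\<^sub>L F w)" using e by simp
      then have "norm (F w - F z) = norm (op_scale cm (w - z) (G z o\<^sub>L F w))" by simp
      also have "\<dots> \<le> cmod (w - z) * (norm (G z) * norm (F w))" by (rule n1)
      also have "\<dots> \<le> cmod (w - z) * (norm (G z) * (2 * norm (F z)))"
        using nFw by (intro mult_left_mono) auto
      finally show ?thesis unfolding C_def .
    qed
    have "((\<lambda>w. F w - F z) \<longlongrightarrow> 0) (at z within S)"
    proof (rule Lim_null_comparison)
      show "eventually (\<lambda>w. norm (F w - F z) \<le> cmod (w - z) * C) (at z within S)"
        using evS evsmall by eventually_elim (use bound in auto)
      show "((\<lambda>w. cmod (w - z) * C) \<longlongrightarrow> 0) (at z within S)"
        using tendsto_mult[OF d0 tendsto_const[of C]] by simp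
    qed
    then have Flim: "(F \<longlongrightarrow> F z) (at z within S)"
      using Lim_null by blast
    have lim: "((\<lambda>w. - (G z o\<^sub>L F w)) \<longlongrightarrow> - (G z o\<^sub>L F z)) (at z within S)"
      by (intro tendsto_minus bounded_bilinear.tendsto[OF bounded_bilinear_blinfun_compose] tendsto_const Flim)
    have "((\<lambda>w. op_scale cm (1 / (w - z)) (F w - F z)) \<longlongrightarrow> - (G z o\<^sub>L F z)) (at z within S)"
    proof (rule Lim_transform_eventually[OF lim])
      show "eventually (\<lambda>w. - (G z o\<^sub>L F w) = op_scale cm (1 / (w - z)) (F w - F z)) (at z within S)"
        using evS
      proof eventually_elim
        case (elim w)
        then have wS: "w \<in> S" by simp
        have "F w - F z = - op_scale cm (w - z) (G z o\<^sub>L F w)" using ident[OF zS wS] by simp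
        then show ?case using op_scale_cancel[OF cs, of "w - z" "G z o\<^sub>L F w"] elim by simp
      qed
    qed
    then show "\<exists>D. ((\<lambda>w. op_scale cm (1 / (w - z)) (A (\<lambda>\<xi>. ch \<xi> / (w - complex_of_real \<xi>)) - A (\<lambda>\<xi>. ch \<xi> / (z - complex_of_real \<xi>)))) \<longlongrightarrow> D) (at z within S)"
      unfolding F_def f_def by blast
  qed
qed

end
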